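(* Let $(E,\mu)$ and $(F,\nu)$ be fuzzy Riesz spaces and $T:E\rightarrow F$ a fuzzy Riesz homomorphism. Then the image under $T$ of a fuzzy projection band in $E$ is a fuzzy projection band in $T(E)$.
   Context: A fuzzy order on a real vector space $E$ is a map $\mu:E\times E\to[0,1]$ with $\mu(x,x)=1$; $\mu(x,y)+\mu(y,x)>1$ implies $x=y$; and $\mu(x,z)\ge\sup_{y}\min(\mu(x,y),\mu(y,z))$. Write $x\le y$ for $\mu(x,y)>\frac12$; suprema/infima are taken with respect to this relation. $(E,\mu)$ is a fuzzy ordered linear space if $\mu(x_1,x_2)>\frac12$ implies $\mu(x_1,x_2)\le\mu(x_1+x,x_2+x)$ for all $x$ and $\mu(x_1,x_2)\le\mu(\alpha x_1,\alpha x_2)$ for all $\alpha>0$; it is a fuzzy Riesz space if $x\vee y=\sup\{x,y\}$ and $x\wedge y=\inf\{x,y\}$ exist for all $x,y$. $|x|=x\vee(-x)$. A fuzzy ideal is a vector subspace $A$ such that $\mu(|x|,|y|)>\frac12$ and $y\in A$ imply $x\in A$. A fuzzy band is a fuzzy ideal $B$ such that whenever $D\subseteq B$ and $\sup D$ exists in the space, $\sup D\in B$. $x\perp y$ means $|x|\wedge|y|=0$, and $B^d=\{x: x\perp y\ \forall y\in B\}$. A fuzzy projection band is a fuzzy band $B$ with $E=B\oplus B^d$. A fuzzy Riesz homomorphism is a linear map with $T(x\vee y)=Tx\vee Ty$; $T(E)$ is a fuzzy Riesz subspace of $F$ regarded as a fuzzy Riesz space with the restricted order. *)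

theory Defs
  imports Complex_Main
begin

text \<open>All notions are relativised to a carrier set V (a linear subspace of a real
vector space); the whole space is V = UNIV, and the image space T(E) is V = range T
with the restricted fuzzy order.\<close>

definition fuzzy_order :: "'a set \<Rightarrow> ('a \<Rightarrow> 'a \<Rightarrow> real) \<Rightarrow> bool" where
  "fuzzy_order V \<mu> \<longleftrightarrow>
     (\<forall>x\<in>V. \<forall>y\<in>V. 0 \<le> \<mu> x y \<and> \<mu> x y \<le> 1) \<and>
     (\<forall>x\<in>V. \<mu> x x = 1) \<and>
     (\<forall>x\<in>V. \<forall>y\<in>V. \<mu> x y + \<mu> y x > 1 \<longrightarrow> x = y) \<and>
     (\<forall>x\<in>V. \<forall>z\<in>V. \<mu> x z \<ge> (SUP y\<in>V. min (\<mu> x y) (\<mu> y z)))"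

definition fle :: "('a \<Rightarrow> 'a \<Rightarrow> real) \<Rightarrow> 'a \<Rightarrow> 'a \<Rightarrow> bool" where
  "fle \<mu> x y \<longleftrightarrow> \<mu> x y > 1/2"

definition is_fsup :: "'a set \<Rightarrow> ('a \<Rightarrow> 'a \<Rightarrow> real) \<Rightarrow> 'a set \<Rightarrow> 'a \<Rightarrow> bool" where
  "is_fsup V \<mu> D s \<longleftrightarrow> s \<in> V \<and> (\<forall>d\<in>D. fle \<mu> d s) \<and>
     (\<forall>u\<in>V. (\<forall>d\<in>D. fle \<mu> d u) \<longrightarrow> fle \<mu> s u)"

definition is_finf :: "'a set \<Rightarrow> ('a \<Rightarrow> 'a \<Rightarrow> real) \<Rightarrow> 'a set \<Rightarrow> 'a \<Rightarrow> bool" where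
  "is_finf V \<mu> D s \<longleftrightarrow> s \<in> V \<and> (\<forall>d\<in>D. fle \<mu> s d) \<and>
     (\<forall>u\<in>V. (\<forall>d\<in>D. fle \<mu> u d) \<longrightarrow> fle \<mu> u s)"

definition fuzzy_ordered_linear_space :: "'a::real_vector set \<Rightarrow> ('a \<Rightarrow> 'a \<Rightarrow> real) \<Rightarrow> bool" where
  "fuzzy_ordered_linear_space V \<mu> \<longleftrightarrow> subspace V \<and> fuzzy_order V \<mu> \<and>
     (\<forall>x1\<in>V. \<forall>x2\<in>V. \<mu> x1 x2 > 1/2 \<longrightarrow>
        (\<forall>x\<in>V. \<mu> x1 x2 \<le> \<mu> (x1 + x) (x2 + x)) \<and>
        (\<forall>\<alpha>::real. \<alpha> > 0 \<longrightarrow> \<mu> x1 x2 \<le> \<mu> (\<alpha> *\<^sub>R x1) (\<alpha> *\<^sub>R x2)))"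

definition fuzzy_riesz_space :: "'a::real_vector set \<Rightarrow> ('a \<Rightarrow> 'a \<Rightarrow> real) \<Rightarrow> bool" where
  "fuzzy_riesz_space V \<mu> \<longleftrightarrow> fuzzy_ordered_linear_space V \<mu> \<and>
     (\<forall>x\<in>V. \<forall>y\<in>V. (\<exists>s. is_fsup V \<mu> {x, y} s) \<and> (\<exists>i. is_finf V \<mu> {x, y} i))"

definition fsup :: "'a set \<Rightarrow> ('a \<Rightarrow> 'a \<Rightarrow> real) \<Rightarrow> 'a \<Rightarrow> 'a \<Rightarrow> 'a" where
  "fsup V \<mu> x y = (THE s. is_fsup V \<mu> {x, y} s)"

definition finf :: "'a set \<Rightarrow> ('a \<Rightarrow> 'a \<Rightarrow> real) \<Rightarrow> 'a \<Rightarrow> 'a \<Rightarrow> 'a" where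
  "finf V \<mu> x y = (THE s. is_finf V \<mu> {x, y} s)"

definition fabs :: "'a::real_vector set \<Rightarrow> ('a \<Rightarrow> 'a \<Rightarrow> real) \<Rightarrow> 'a \<Rightarrow> 'a" where
  "fabs V \<mu> x = fsup V \<mu> x (- x)"

definition fuzzy_ideal :: "'a::real_vector set \<Rightarrow> ('a \<Rightarrow> 'a \<Rightarrow> real) \<Rightarrow> 'a set \<Rightarrow> bool" where
  "fuzzy_ideal V \<mu> A \<longleftrightarrow> subspace A \<and> A \<subseteq> V \<and>
     (\<forall>x\<in>V. \<forall>y\<in>A. fle \<mu> (fabs V \<mu> x) (fabs V \<mu> y) \<longrightarrow> x \<in> A)"

definition fuzzy_band :: "'a::real_vector set \<Rightarrow> ('a \<Rightarrow> 'a \<Rightarrow> real) \<Rightarrow> 'a set \<Rightarrow> bool" where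
  "fuzzy_band V \<mu> B \<longleftrightarrow> fuzzy_ideal V \<mu> B \<and>
     (\<forall>D s. D \<subseteq> B \<longrightarrow> is_fsup V \<mu> D s \<longrightarrow> s \<in> B)"

definition fdisjoint :: "'a::real_vector set \<Rightarrow> ('a \<Rightarrow> 'a \<Rightarrow> real) \<Rightarrow> 'a \<Rightarrow> 'a \<Rightarrow> bool" where
  "fdisjoint V \<mu> x y \<longleftrightarrow> finf V \<mu> (fabs V \<mu> x) (fabs V \<mu> y) = 0"

definition fdisjoint_compl :: "'a::real_vector set \<Rightarrow> ('a \<Rightarrow> 'a \<Rightarrow> real) \<Rightarrow> 'a set \<Rightarrow> 'a set" where
  "fdisjoint_compl V \<mu> B = {x \<in> V. \<forall>y\<in>B. fdisjoint V \<mu> x y}"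

definition fuzzy_projection_band :: "'a::real_vector set \<Rightarrow> ('a \<Rightarrow> 'a \<Rightarrow> real) \<Rightarrow> 'a set \<Rightarrow> bool" where
  "fuzzy_projection_band V \<mu> B \<longleftrightarrow> fuzzy_band V \<mu> B \<and>
     (\<forall>x\<in>V. \<exists>b\<in>B. \<exists>c\<in>fdisjoint_compl V \<mu> B. x = b + c) \<and>
     B \<inter> fdisjoint_compl V \<mu> B = {0}"

definition fuzzy_riesz_hom ::
  "('a::real_vector \<Rightarrow> 'a \<Rightarrow> real) \<Rightarrow> ('b::real_vector \<Rightarrow> 'b \<Rightarrow> real) \<Rightarrow> ('a \<Rightarrow> 'b) \<Rightarrow> bool" where
  "fuzzy_riesz_hom \<mu> \<nu> T \<longleftrightarrow> linear T \<and>
     (\<forall>x y. T (fsup UNIV \<mu> x y) = fsup UNIV \<nu> (T x) (T y))"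

end

theory Submission
  imports Defs
begin

locale rs =
  fixes V :: "'a::real_vector set" and m :: "'a \<Rightarrow> 'a \<Rightarrow> real"
  assumes sub: "subspace V"
  and r_refl: "x \<in> V \<Longrightarrow> fle m x x"
  and r_antisym: "x \<in> V \<Longrightarrow> y \<in> V \<Longrightarrow> fle m x y \<Longrightarrow> fle m y x \<Longrightarrow> x = y"
  and r_trans: "x \<in> V \<Longrightarrow> y \<in> V \<Longrightarrow> z \<in> V \<Longrightarrow> fle m x y \<Longrightarrow> fle m y z \<Longrightarrow> fle m x z"
  and r_add: "x \<in> V \<Longrightarrow> y \<in> V \<Longrightarrow> z \<in> V \<Longrightarrow> fle m x y \<Longrightarrow> fle m (x + z) (y + z)"
  and r_scal: "x \<in> V \<Longrightarrow> y \<in> V \<Longrightarrow> (a::real) > 0 \<Longrightarrow> fle m x y \<Longrightarrow> fle m (a *\<^sub>R x) (a *\<^sub>R y)"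
  and r_supex: "x \<in> V \<Longrightarrow> y \<in> V \<Longrightarrow> \<exists>s. is_fsup V m {x, y} s"
begin

lemma V0: "0 \<in> V" using sub real_vector.subspace_0 by blast
lemma Vadd: "x \<in> V \<Longrightarrow> y \<in> V \<Longrightarrow> x + y \<in> V" using sub real_vector.subspace_add by blast
lemma Vneg: "x \<in> V \<Longrightarrow> - x \<in> V" using sub real_vector.subspace_neg by blast
lemma Vdiff: "x \<in> V \<Longrightarrow> y \<in> V \<Longrightarrow> x - y \<in> V" using sub real_vector.subspace_diff by blast
lemma Vscale: "x \<in> V \<Longrightarrow> c *\<^sub>R x \<in> V" using sub real_vector.subspace_scale by blast

lemma le_addD: "x \<in> V \<Longrightarrow> y \<in> V \<Longrightarrow> z \<in> V \<Longrightarrow> fle m (x + z) (y + z) \<Longrightarrow> fle m x y"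
  using r_add[of "x + z" "y + z" "- z"] by (simp add: Vadd Vneg)

lemma le_neg: "x \<in> V \<Longrightarrow> y \<in> V \<Longrightarrow> fle m x y \<Longrightarrow> fle m (- y) (- x)"
  using r_add[of x y "- x - y"] by (simp add: Vdiff Vneg)

lemma le_add_mono: "a \<in> V \<Longrightarrow> b \<in> V \<Longrightarrow> c \<in> V \<Longrightarrow> d \<in> V \<Longrightarrow> fle m a b \<Longrightarrow> fle m c d
   \<Longrightarrow> fle m (a + c) (b + d)"
  using r_add[of a b c] r_add[of c d b] r_trans[of "a + c" "b + c" "b + d"]
  by (simp add: Vadd add.commute)

lemma le_sub0: "x \<in> V \<Longrightarrow> y \<in> V \<Longrightarrow> fle m x y \<Longrightarrow> fle m (x - y) 0"
  using r_add[of x y "- y"] by (simp add: Vneg)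

lemma le_0sub: "x \<in> V \<Longrightarrow> y \<in> V \<Longrightarrow> fle m (x - y) 0 \<Longrightarrow> fle m x y"
  using r_add[of "x - y" 0 y] by (simp add: Vdiff V0)

lemma sup_ex1: "x \<in> V \<Longrightarrow> y \<in> V \<Longrightarrow> \<exists>!s. is_fsup V m {x, y} s"
proof -
  assume x: "x \<in> V" and y: "y \<in> V"
  obtain s where s: "is_fsup V m {x, y} s" using r_supex[OF x y] by blast
  have "t = s" if t: "is_fsup V m {x, y} t" for t
  proof -
    have "fle m s t" "fle m t s" "s \<in> V" "t \<in> V" using s t unfolding is_fsup_def by auto
    then show ?thesis using r_antisym by blast
  qed
  then show ?thesis using s by blast
qed

lemma sup_is: "x \<in> V \<Longrightarrow> y \<in> V \<Longrightarrow> is_fsup V m {x, y} (fsup V m x y)"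
  unfolding fsup_def by (rule theI', rule sup_ex1)

lemma sup_unique: "x \<in> V \<Longrightarrow> y \<in> V \<Longrightarrow> is_fsup V m {x, y} s \<Longrightarrow> fsup V m x y = s"
  using sup_ex1 sup_is by blast

lemma sup_in: "x \<in> V \<Longrightarrow> y \<in> V \<Longrightarrow> fsup V m x y \<in> V"
  using sup_is unfolding is_fsup_def by blast
lemma sup_ge1: "x \<in> V \<Longrightarrow> y \<in> V \<Longrightarrow> fle m x (fsup V m x y)"
  using sup_is unfolding is_fsup_def by blast
lemma sup_ge2: "x \<in> V \<Longrightarrow> y \<in> V \<Longrightarrow> fle m y (fsup V m x y)"
  using sup_is unfolding is_fsup_def by blast
lemma sup_least: "x \<in> V \<Longrightarrow> y \<in> V \<Longrightarrow> u \<in> V \<Longrightarrow> fle m x u \<Longrightarrow> fle m y u \<Longrightarrow> fle m (fsup V m x y) u"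
  using sup_is unfolding is_fsup_def by blast

lemma inf_is: "x \<in> V \<Longrightarrow> y \<in> V \<Longrightarrow> is_finf V m {x, y} (- fsup V m (- x) (- y))"
proof -
  assume x: "x \<in> V" and y: "y \<in> V"
  let ?s = "fsup V m (- x) (- y)"
  have s: "?s \<in> V" using x y by (simp add: sup_in Vneg)
  have 1: "fle m (- ?s) x" using le_neg[OF _ s sup_ge1[of "-x" "-y"]] x y by (simp add: Vneg)
  have 2: "fle m (- ?s) y" using le_neg[OF _ s sup_ge2[of "-x" "-y"]] x y by (simp add: Vneg)
  have 3: "fle m u (- ?s)" if u: "u \<in> V" "fle m u x" "fle m u y" for u
  proof -
    have "fle m ?s (- u)"
      using sup_least[of "-x" "-y" "-u"] le_neg[of u x] le_neg[of u y] u x y by (simp add: Vneg)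
    then show ?thesis using le_neg[OF s Vneg[OF u(1)]] by simp
  qed
  show ?thesis unfolding is_finf_def using 1 2 3 s by (auto simp: Vneg)
qed

lemma inf_eq: "x \<in> V \<Longrightarrow> y \<in> V \<Longrightarrow> finf V m x y = - fsup V m (- x) (- y)"
proof -
  assume x: "x \<in> V" and y: "y \<in> V"
  have "\<exists>!s. is_finf V m {x, y} s"
  proof (rule ex1I[of _ "- fsup V m (- x) (- y)"])
    show "is_finf V m {x, y} (- fsup V m (- x) (- y))" using inf_is[OF x y] .
    fix t assume t: "is_finf V m {x, y} t"
    have "fle m (- fsup V m (- x) (- y)) t" "fle m t (- fsup V m (- x) (- y))"
      "(- fsup V m (- x) (- y)) \<in> V" "t \<in> V" using inf_is[OF x y] t unfolding is_finf_def by auto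
    then show "t = - fsup V m (- x) (- y)" using r_antisym by blast
  qed
  then show ?thesis unfolding finf_def using inf_is[OF x y] by (metis the_equality)
qed

lemma inf_is': "x \<in> V \<Longrightarrow> y \<in> V \<Longrightarrow> is_finf V m {x, y} (finf V m x y)"
  using inf_is inf_eq by simp

lemma inf_in: "x \<in> V \<Longrightarrow> y \<in> V \<Longrightarrow> finf V m x y \<in> V"
  using inf_is' unfolding is_finf_def by blast
lemma inf_le1: "x \<in> V \<Longrightarrow> y \<in> V \<Longrightarrow> fle m (finf V m x y) x"
  using inf_is' unfolding is_finf_def by blast
lemma inf_le2: "x \<in> V \<Longrightarrow> y \<in> V \<Longrightarrow> fle m (finf V m x y) y"
  using inf_is' unfolding is_finf_def by blast
lemma inf_greatest: "x \<in> V \<Longrightarrow> y \<in> V \<Longrightarrow> u \<in> V \<Longrightarrow> fle m u x \<Longrightarrow> fle m u y \<Longrightarrow> fle m u (finf V m x y)"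
  using inf_is' unfolding is_finf_def by blast

lemma inf_comm: "finf V m x y = finf V m y x"
  unfolding finf_def by (simp add: insert_commute)

lemma inf_eq_left: "p \<in> V \<Longrightarrow> q \<in> V \<Longrightarrow> fle m p q \<Longrightarrow> finf V m p q = p"
  by (meson inf_greatest inf_in inf_le1 r_antisym r_refl)

lemma abs_in: "x \<in> V \<Longrightarrow> fabs V m x \<in> V"
  unfolding fabs_def by (simp add: sup_in Vneg)
lemma abs_ge: "x \<in> V \<Longrightarrow> fle m x (fabs V m x)"
  unfolding fabs_def by (simp add: sup_ge1 Vneg)
lemma abs_ge_neg: "x \<in> V \<Longrightarrow> fle m (- x) (fabs V m x)"
  unfolding fabs_def by (simp add: sup_ge2 Vneg)

lemma abs_minus: "fabs V m (- x) = fabs V m x"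
  unfolding fabs_def fsup_def by (simp add: insert_commute)

lemma abs_nonneg: "x \<in> V \<Longrightarrow> fle m 0 (fabs V m x)"
proof -
  assume x: "x \<in> V"
  have a: "fabs V m x \<in> V" using abs_in x .
  have "fle m (x + - x) (fabs V m x + fabs V m x)"
    using le_add_mono[OF x a Vneg[OF x] a abs_ge[OF x] abs_ge_neg[OF x]] .
  then have "fle m ((1/2) *\<^sub>R 0) ((1/2) *\<^sub>R (fabs V m x + fabs V m x))"
    using r_scal[of 0 "fabs V m x + fabs V m x" "1/2"] by (simp add: V0 Vadd a)
  moreover have "(1/2::real) *\<^sub>R (fabs V m x + fabs V m x) = fabs V m x"
    by (simp add: scaleR_2[symmetric])
  ultimately show ?thesis by simp
qed

lemma neg_nonneg: "x \<in> V \<Longrightarrow> fle m x 0 \<Longrightarrow> fle m 0 (- x)"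
  using le_neg[of x 0] by (simp add: V0)

lemma abs_nonpos: "x \<in> V \<Longrightarrow> fle m x 0 \<Longrightarrow> fabs V m x = - x"
proof -
  assume x: "x \<in> V" and le: "fle m x 0"
  have "fle m x (- x)" using r_trans[OF x V0 Vneg[OF x] le neg_nonneg[OF x le]] .
  then have "fle m (fabs V m x) (- x)"
    unfolding fabs_def using sup_least[OF x Vneg[OF x] Vneg[OF x]] x r_refl Vneg by blast
  then show ?thesis using abs_ge_neg[OF x] r_antisym abs_in x Vneg by blast
qed

lemma abs_0: "fabs V m 0 = 0"
  using abs_nonpos[OF V0 r_refl[OF V0]] by simp

lemma abs_eq0: "x \<in> V \<Longrightarrow> fabs V m x = 0 \<Longrightarrow> x = 0"
proof -
  assume x: "x \<in> V" and a: "fabs V m x = 0"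
  have 1: "fle m x 0" using abs_ge[OF x] a by simp
  have "fle m (- x) 0" using abs_ge_neg[OF x] a by simp
  then have "fle m 0 x" using le_neg[OF Vneg[OF x] V0] by simp
  then show ?thesis using 1 r_antisym x V0 by blast
qed

lemma abs_tri: "a \<in> V \<Longrightarrow> b \<in> V \<Longrightarrow> fle m (fabs V m (a + b)) (fabs V m a + fabs V m b)"
proof -
  assume a: "a \<in> V" and b: "b \<in> V"
  have 1: "fle m (a + b) (fabs V m a + fabs V m b)"
    using le_add_mono[OF a abs_in[OF a] b abs_in[OF b] abs_ge[OF a] abs_ge[OF b]] .
  have "fle m (- a + - b) (fabs V m a + fabs V m b)"
    using le_add_mono[OF Vneg[OF a] abs_in[OF a] Vneg[OF b] abs_in[OF b] abs_ge_neg[OF a] abs_ge_neg[OF b]] .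
  then have 2: "fle m (- (a + b)) (fabs V m a + fabs V m b)" by (simp add: add.commute)
  show ?thesis unfolding fabs_def[of V m "a + b"]
    using sup_least[OF Vadd[OF a b] Vneg[OF Vadd[OF a b]] Vadd[OF abs_in[OF a] abs_in[OF b]] 1 2] .
qed

lemma K1:
  assumes p: "p \<in> V" and q: "q \<in> V" and r: "r \<in> V"
    and p0: "fle m 0 p" and r0: "fle m 0 r"
    and pq: "finf V m p q = 0" and pr: "finf V m p r = 0" and le: "fle m p (q + r)"
  shows "p = 0"
proof -
  have 1: "fle m (p - r) q" using le_addD[of "p - r" q r] le p q r by (simp add: Vdiff)
  have "fle m (p - r + 0) (p - r + r)" using r_add[OF V0 r Vdiff[OF p r] r0] by (simp add: add.commute)
  then have 2: "fle m (p - r) p" by simp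
  have "fle m (p - r) 0" using inf_greatest[OF p q Vdiff[OF p r] 2 1] pq by simp
  then have 3: "fle m p r" using le_0sub p r by blast
  have "fle m p 0" using inf_greatest[OF p r p r_refl[OF p] 3] pr by simp
  then show ?thesis using p0 r_antisym p V0 by blast
qed

lemma disj_sym: "fdisjoint V m x y \<Longrightarrow> fdisjoint V m y x"
  unfolding fdisjoint_def using inf_comm by metis

lemma D1:
  assumes c: "c \<in> V" and x: "x \<in> V" and d1: "fdisjoint V m c x" and d2: "fdisjoint V m c (x + c)"
  shows "c = 0"
proof -
  have "fle m (fabs V m ((x + c) + - x)) (fabs V m (x + c) + fabs V m (- x))"
    using abs_tri[OF Vadd[OF x c] Vneg[OF x]] .
  then have le: "fle m (fabs V m c) (fabs V m (x + c) + fabs V m x)" by (simp add: abs_minus)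
  have "fabs V m c = 0"
    using K1[OF abs_in[OF c] abs_in[OF Vadd[OF x c]] abs_in[OF x] abs_nonneg[OF c] abs_nonneg[OF x] _ _ le]
      d1 d2 unfolding fdisjoint_def by simp
  then show ?thesis using abs_eq0 c by blast
qed

lemma D2:
  assumes u: "u \<in> V" and v: "v \<in> V" and d: "fdisjoint V m u v" and uv: "fle m u v" and v0: "fle m v 0"
  shows "v = 0"
proof -
  have u0: "fle m u 0" using r_trans[OF u v V0 uv v0] .
  have "fle m (fabs V m v) (fabs V m u)"
    using abs_nonpos[OF u u0] abs_nonpos[OF v v0] le_neg[OF u v uv] by simp
  then have "finf V m (fabs V m v) (fabs V m u) = fabs V m v"
    using inf_eq_left abs_in u v by blast
  then have "fabs V m v = 0" using d inf_comm unfolding fdisjoint_def by metis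
  then show ?thesis using abs_eq0 v by blast
qed

lemma D3:
  assumes u: "u \<in> V" and v: "v \<in> V" and d: "fdisjoint V m u v" and uv: "fle m u v"
  shows "fle m u 0"
proof -
  let ?w = "fsup V m u 0"
  have w: "?w \<in> V" using sup_in u V0 by blast
  have "fle m u (fabs V m v)" using r_trans[OF u v abs_in[OF v] uv abs_ge[OF v]] .
  then have 1: "fle m ?w (fabs V m v)" using sup_least[OF u V0 abs_in[OF v] _ abs_nonneg[OF v]] by simp
  have 2: "fle m ?w (fabs V m u)" using sup_least[OF u V0 abs_in[OF u] abs_ge[OF u] abs_nonneg[OF u]] .
  have "fle m ?w 0" using inf_greatest[OF abs_in[OF u] abs_in[OF v] w 2 1] d unfolding fdisjoint_def by simp
  then show ?thesis using r_trans[OF u w V0 sup_ge1[OF u V0]] by simp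
qed

lemma disj0: "y \<in> V \<Longrightarrow> fdisjoint V m 0 y"
  unfolding fdisjoint_def abs_0 using inf_eq_left[OF V0 abs_in abs_nonneg] by simp

lemma disj_self: "x \<in> V \<Longrightarrow> fdisjoint V m x x \<Longrightarrow> x = 0"
  unfolding fdisjoint_def using inf_eq_left[OF abs_in abs_in r_refl[OF abs_in]] abs_eq0 by simp

lemma disj_mono:
  assumes c: "c \<in> V" and x: "x \<in> V" and y: "y \<in> V" and d: "fdisjoint V m c y"
    and le: "fle m (fabs V m x) (fabs V m y)"
  shows "fdisjoint V m c x"
proof -
  have 1: "fle m (finf V m (fabs V m c) (fabs V m x)) 0"
    using inf_greatest[OF abs_in[OF c] abs_in[OF y] inf_in[OF abs_in[OF c] abs_in[OF x]]
        inf_le1[OF abs_in[OF c] abs_in[OF x]]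
        r_trans[OF inf_in[OF abs_in[OF c] abs_in[OF x]] abs_in[OF x] abs_in[OF y] inf_le2[OF abs_in[OF c] abs_in[OF x]] le]]
      d unfolding fdisjoint_def by simp
  have 2: "fle m 0 (finf V m (fabs V m c) (fabs V m x))"
    using inf_greatest[OF abs_in[OF c] abs_in[OF x] V0 abs_nonneg[OF c] abs_nonneg[OF x]] .
  show ?thesis unfolding fdisjoint_def using r_antisym[OF inf_in[OF abs_in[OF c] abs_in[OF x]] V0 1 2] .
qed

lemma least0: "s \<in> V \<Longrightarrow> (\<forall>u\<in>V. fle m s u) \<Longrightarrow> s = 0"
proof -
  assume s: "s \<in> V" and h: "\<forall>u\<in>V. fle m s u"
  have "fle m s (s + - fabs V m s)" using h Vadd[OF s Vneg[OF abs_in[OF s]]] by blast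
  then have "fle m (s + 0) (s + - fabs V m s)" by simp
  then have "fle m 0 (- fabs V m s)" using le_addD V0 Vneg abs_in s by (metis add.commute)
  then have "fle m (fabs V m s) 0" using le_neg[OF V0 Vneg[OF abs_in[OF s]]] by simp
  then have "fabs V m s = 0" using abs_nonneg[OF s] r_antisym abs_in s V0 by blast
  then show ?thesis using abs_eq0 s by blast
qed

end


lemma frs_rs:
  fixes \<mu> :: "'a::real_vector \<Rightarrow> 'a \<Rightarrow> real"
  assumes "fuzzy_riesz_space UNIV \<mu>"
  shows "rs UNIV \<mu>"
proof -
  have fo: "fuzzy_order UNIV \<mu>" and ol: "fuzzy_ordered_linear_space UNIV \<mu>"
    using assms unfolding fuzzy_riesz_space_def fuzzy_ordered_linear_space_def by auto
  have bnd: "\<And>x y. \<mu> x y \<le> 1" and one: "\<And>x. \<mu> x x = 1"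
    and as: "\<And>x y. \<mu> x y + \<mu> y x > 1 \<Longrightarrow> x = y"
    and tr: "\<And>x z. \<mu> x z \<ge> (SUP y\<in>UNIV. min (\<mu> x y) (\<mu> y z))"
    using fo unfolding fuzzy_order_def by auto
  show ?thesis
  proof
    show "subspace (UNIV::'a set)" by (rule real_vector.subspace_UNIV)
    show "fle \<mu> x x" for x unfolding fle_def using one by simp
    show "x = y" if "fle \<mu> x y" "fle \<mu> y x" for x y using that as unfolding fle_def by force
    show "fle \<mu> x z" if "fle \<mu> x y" "fle \<mu> y z" for x y z
    proof -
      have bd: "bdd_above ((\<lambda>y. min (\<mu> x y) (\<mu> y z)) ` UNIV)"
        by (rule bdd_aboveI[of _ 1]) (auto simp: bnd min.coboundedI1)
      have "min (\<mu> x y) (\<mu> y z) \<le> (SUP y\<in>UNIV. min (\<mu> x y) (\<mu> y z))"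
        by (rule cSUP_upper[OF UNIV_I bd])
      then show ?thesis using tr[of x z] that unfolding fle_def by linarith
    qed
    have inv1: "\<And>x1 x2 x. \<mu> x1 x2 > 1/2 \<Longrightarrow> \<mu> x1 x2 \<le> \<mu> (x1 + x) (x2 + x)"
      and inv2: "\<And>x1 x2 (c::real). \<mu> x1 x2 > 1/2 \<Longrightarrow> c > 0 \<Longrightarrow> \<mu> x1 x2 \<le> \<mu> (c *\<^sub>R x1) (c *\<^sub>R x2)"
      using ol unfolding fuzzy_ordered_linear_space_def by auto
    show "fle \<mu> (x + z) (y + z)" if "fle \<mu> x y" for x y z
      using inv1[of x y z] that unfolding fle_def by linarith
    show "fle \<mu> (a *\<^sub>R x) (a *\<^sub>R y)" if "a > 0" "fle \<mu> x y" for x y and a :: real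
      using inv2[of x y a] that unfolding fle_def by linarith
    show "\<exists>s. is_fsup UNIV \<mu> {x, y} s" for x y
      using assms unfolding fuzzy_riesz_space_def by blast
  qed
qed

lemma fsupD1: "is_fsup V m D s \<Longrightarrow> s \<in> V" unfolding is_fsup_def by simp
lemma fsupD2: "is_fsup V m D s \<Longrightarrow> d \<in> D \<Longrightarrow> fle m d s" unfolding is_fsup_def by simp
lemma fsupD3: "is_fsup V m D s \<Longrightarrow> u \<in> V \<Longrightarrow> (\<And>d. d \<in> D \<Longrightarrow> fle m d u) \<Longrightarrow> fle m s u"
  unfolding is_fsup_def by simp

lemma fsup_restrict: "is_fsup UNIV m D s \<Longrightarrow> s \<in> W \<Longrightarrow> is_fsup W m D s"
  unfolding is_fsup_def by blast

lemma hom_rs: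
  fixes \<nu> :: "'b::real_vector \<Rightarrow> 'b \<Rightarrow> real" and \<mu> :: "'a::real_vector \<Rightarrow> 'a \<Rightarrow> real"
    and T :: "'a \<Rightarrow> 'b"
  assumes rn: "rs UNIV \<nu>" and h: "fuzzy_riesz_hom \<mu> \<nu> T"
  shows "rs (range T) \<nu>"
    and "\<And>a b. is_fsup (range T) \<nu> {T a, T b} (T (fsup UNIV \<mu> a b))"
proof -
  have lin: "linear T" using h unfolding fuzzy_riesz_hom_def by blast
  have hs: "\<And>x y. T (fsup UNIV \<mu> x y) = fsup UNIV \<nu> (T x) (T y)"
    using h unfolding fuzzy_riesz_hom_def by blast
  show isup: "\<And>a b. is_fsup (range T) \<nu> {T a, T b} (T (fsup UNIV \<mu> a b))"
    using fsup_restrict[OF rs.sup_is[OF rn]] hs by (metis UNIV_I rangeI)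
  show "rs (range T) \<nu>"
  proof
    show "subspace (range T)" using real_vector.linear_subspace_image[OF lin real_vector.subspace_UNIV] .
    show "fle \<nu> x x" for x using rs.r_refl[OF rn] by blast
    show "x = y" if "fle \<nu> x y" "fle \<nu> y x" for x y using rs.r_antisym[OF rn] that by blast
    show "fle \<nu> x z" if "fle \<nu> x y" "fle \<nu> y z" for x y z using rs.r_trans[OF rn] that by blast
    show "fle \<nu> (x + z) (y + z)" if "fle \<nu> x y" for x y z using rs.r_add[OF rn] that by blast
    show "fle \<nu> (a *\<^sub>R x) (a *\<^sub>R y)" if "a > 0" "fle \<nu> x y" for x y and a :: real
      using rs.r_scal[OF rn] that by blast
    show "\<exists>s. is_fsup (range T) \<nu> {x, y} s" if "x \<in> range T" "y \<in> range T" for x y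
      using that isup by blast
  qed
qed


theorem theorem2p8:
  fixes \<mu> :: "'a::real_vector \<Rightarrow> 'a \<Rightarrow> real"
    and \<nu> :: "'b::real_vector \<Rightarrow> 'b \<Rightarrow> real"
    and T :: "'a \<Rightarrow> 'b"
    and B :: "'a set"
  assumes "fuzzy_riesz_space UNIV \<mu>"
    and "fuzzy_riesz_space UNIV \<nu>"
    and "fuzzy_riesz_hom \<mu> \<nu> T"
    and "fuzzy_projection_band UNIV \<mu> B"
  shows "fuzzy_projection_band (range T) \<nu> (T ` B)"
proof -
  note h = assms(3)
  have rE: "rs UNIV \<mu>" using frs_rs assms(1) by blast
  have rF: "rs UNIV \<nu>" using frs_rs assms(2) by blast
  have rR: "rs (range T) \<nu>" using hom_rs(1)[OF rF h] .
  have lin: "linear T" using h unfolding fuzzy_riesz_hom_def by blast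
  have T_sup: "\<And>a b. T (fsup UNIV \<mu> a b) = fsup (range T) \<nu> (T a) (T b)"
    using rs.sup_unique[OF rR] hom_rs(2)[OF rF h] by (metis rangeI)
  have T_inf: "\<And>a b. T (finf UNIV \<mu> a b) = finf (range T) \<nu> (T a) (T b)"
  proof -
    fix a b
    have "T (finf UNIV \<mu> a b) = - T (fsup UNIV \<mu> (- a) (- b))"
      using rs.inf_eq[OF rE] linear_neg[OF lin] by simp
    also have "\<dots> = - fsup (range T) \<nu> (- T a) (- T b)"
      using T_sup linear_neg[OF lin] by simp
    also have "\<dots> = finf (range T) \<nu> (T a) (T b)"
      using rs.inf_eq[OF rR] by simp
    finally show "T (finf UNIV \<mu> a b) = finf (range T) \<nu> (T a) (T b)" .
  qed
  have T_abs: "\<And>a. T (fabs UNIV \<mu> a) = fabs (range T) \<nu> (T a)"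
    unfolding fabs_def using T_sup linear_neg[OF lin] by simp
  have T_disj: "\<And>a b. fdisjoint UNIV \<mu> a b \<Longrightarrow> fdisjoint (range T) \<nu> (T a) (T b)"
    unfolding fdisjoint_def using T_inf T_abs linear_0[OF lin] by metis
  have pb: "fuzzy_band UNIV \<mu> B" and dec: "\<And>x. \<exists>b\<in>B. \<exists>c\<in>fdisjoint_compl UNIV \<mu> B. x = b + c"
    using assms(4) unfolding fuzzy_projection_band_def by auto
  have subB: "subspace B" using pb unfolding fuzzy_band_def fuzzy_ideal_def by blast
  have decT: "\<exists>a1\<in>B. \<exists>a2. (\<forall>y\<in>B. fdisjoint UNIV \<mu> a2 y) \<and> T a = T a1 + T a2" for a
  proof -
    obtain b c where "b \<in> B" "c \<in> fdisjoint_compl UNIV \<mu> B" "a = b + c" using dec by blast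
    then show ?thesis unfolding fdisjoint_compl_def using linear_add[OF lin] by blast
  qed
  have TBR: "T ` B \<subseteq> range T" by blast
  have ideal: "fuzzy_ideal (range T) \<nu> (T ` B)"
    unfolding fuzzy_ideal_def
  proof (intro conjI ballI impI TBR)
    show "subspace (T ` B)" using real_vector.linear_subspace_image[OF lin subB] .
    fix x y assume x: "x \<in> range T" and y: "y \<in> T ` B"
      and le: "fle \<nu> (fabs (range T) \<nu> x) (fabs (range T) \<nu> y)"
    obtain a where a: "x = T a" using x by blast
    obtain b where b: "b \<in> B" "y = T b" using y by blast
    obtain a1 a2 where a1: "a1 \<in> B" and a2: "\<forall>y\<in>B. fdisjoint UNIV \<mu> a2 y" and eq: "T a = T a1 + T a2"
      using decT by blast
    have d1: "fdisjoint (range T) \<nu> (T a2) (T b)" using T_disj a2 b by blast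
    have d2: "fdisjoint (range T) \<nu> (T a2) (T a1)" using T_disj a2 a1 by blast
    have d3: "fdisjoint (range T) \<nu> (T a2) (T a)"
      using rs.disj_mono[OF rR _ _ _ d1] le a b by blast
    have "T a2 = 0" using rs.D1[OF rR _ _ d2] d3 eq by (simp add: add.commute)
    then show "x \<in> T ` B" using a eq a1 by simp
  qed
  have band: "s \<in> T ` B" if D: "D \<subseteq> T ` B" and s: "is_fsup (range T) \<nu> D s" for D s
  proof (cases "D = {}")
    case True
    then have "\<forall>u\<in>range T. fle \<nu> s u" using fsupD3[OF s] by blast
    then have "s = 0" using rs.least0[OF rR fsupD1[OF s]] by blast
    then show ?thesis using real_vector.subspace_0[OF subB] linear_0[OF lin] by (metis imageI)
  next
    case False
    obtain a where a: "s = T a" using fsupD1[OF s] by blast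
    obtain a1 a2 where a1: "a1 \<in> B" and a2: "\<forall>y\<in>B. fdisjoint UNIV \<mu> a2 y" and eq: "T a = T a1 + T a2"
      using decT by blast
    have key: "fle \<nu> (d - T a1) (T a2)" "fle \<nu> (d - T a1) 0" if d: "d \<in> D" for d
    proof -
      obtain b where b: "b \<in> B" "d = T b" using d D by blast
      have dis: "fdisjoint (range T) \<nu> (T a2) (T (b - a1))"
        using T_disj a2 real_vector.subspace_diff[OF subB b(1) a1] by blast
      have "fle \<nu> d (T a1 + T a2)" using fsupD2[OF s d] a eq by simp
      then have f: "fle \<nu> (d - T a1 + T a1) (T a2 + T a1)" by (simp add: add.commute)
      have dr: "d - T a1 \<in> range T" using b linear_diff[OF lin] by (metis rangeI)
      show 1: "fle \<nu> (d - T a1) (T a2)"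
        using rs.le_addD[OF rR dr rangeI rangeI f] .
      show "fle \<nu> (d - T a1) 0"
        using rs.D3[OF rR _ _ rs.disj_sym[OF rR dis] ] 1 b dr linear_diff[OF lin] by auto
    qed
    have ub: "fle \<nu> d (T a1)" if "d \<in> D" for d
      using rs.le_0sub[OF rR, of d "T a1"] key(2)[OF that] D that by blast
    then have "fle \<nu> s (T a1)" using fsupD3[OF s] by blast
    then have "fle \<nu> (T a1 + T a2) (T a1 + 0)" using a eq by simp
    then have "fle \<nu> (T a2 + T a1) (0 + T a1)" by (simp add: add.commute)
    then have c0: "fle \<nu> (T a2) 0" using rs.le_addD[OF rR rangeI rs.V0[OF rR] rangeI] by blast
    obtain d where d: "d \<in> D" using False by blast
    then obtain b where b: "b \<in> B" "d = T b" using D by blast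
    have dis: "fdisjoint (range T) \<nu> (T a2) (T (b - a1))"
      using T_disj a2 real_vector.subspace_diff[OF subB b(1) a1] by blast
    have k: "fle \<nu> (T (b - a1)) (T a2)" using key(1)[OF d] b linear_diff[OF lin] by simp
    have "T a2 = 0"
      using rs.D2[OF rR rangeI rangeI rs.disj_sym[OF rR dis] k c0] .
    then show ?thesis using a eq a1 by simp
  qed
  have split: "\<exists>b\<in>T ` B. \<exists>c\<in>fdisjoint_compl (range T) \<nu> (T ` B). x = b + c" if xr: "x \<in> range T" for x
  proof -
    obtain a where a: "x = T a" using xr by blast
    obtain a1 a2 where a1: "a1 \<in> B" and a2: "\<forall>y\<in>B. fdisjoint UNIV \<mu> a2 y" and eq: "T a = T a1 + T a2"
      using decT by blast
    have "T a2 \<in> fdisjoint_compl (range T) \<nu> (T ` B)"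
      unfolding fdisjoint_compl_def using T_disj a2 by blast
    then show ?thesis using a eq a1 by blast
  qed
  have inter: "T ` B \<inter> fdisjoint_compl (range T) \<nu> (T ` B) = {0}"
  proof
    show "T ` B \<inter> fdisjoint_compl (range T) \<nu> (T ` B) \<subseteq> {0}"
      unfolding fdisjoint_compl_def using rs.disj_self[OF rR] by blast
    have "0 \<in> T ` B" using real_vector.subspace_0[OF subB] linear_0[OF lin] by (metis imageI)
    moreover have "0 \<in> fdisjoint_compl (range T) \<nu> (T ` B)"
      unfolding fdisjoint_compl_def using rs.disj0[OF rR] rs.V0[OF rR] by blast
    ultimately show "{0} \<subseteq> T ` B \<inter> fdisjoint_compl (range T) \<nu> (T ` B)" by blast
  qed
  show ?thesis
    unfolding fuzzy_projection_band_def fuzzy_band_def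
    using ideal band split inter by blast
qed

end
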